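(* Let $(M^{2m},g,I,J)$ be a generalized Kähler manifold with $\det(I+J)\neq0$ everywhere, and let $b:=-g(I+J)^{-1}(I-J)$, i.e. $b(X,Y)=-g((I+J)^{-1}(I-J)X,Y)$, which is a 2-form of type $(2,0)+(0,2)$ with respect to both $I$ and $J$. Then for every vector $X$, $$d\big(\log\det(I+J)\big)(X)=-2\langle b,\iota_XH\rangle_g,$$ where $H=d^c_I\omega_I$.
   Context: Conventions: $\omega_I(X,Y):=g(IX,Y)$, $d^c_I:=\sqrt{-1}(\bar\partial_I-\partial_I)$. A generalized Kähler structure $(g,I,J)$: integrable $I,J$, $g$ Hermitian for both, with $d^c_I\omega_I=H=-d^c_J\omega_J$ and $dH=0$. The inner product on 2-forms is the standard one induced by $g$ (for which $e^i\wedge e^j$, $i<j$, are orthonormal for a $g$-orthonormal coframe). *)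

theory Defs
  imports "HOL-Analysis.Analysis"
begin

text \<open>Local (chart) model: an open set U in R^n, n = CARD('n). Tensor fields are
  functions on U; g, I, J are matrix-valued. Vectors X are tangent vectors at a point.\<close>

fun Ck_on :: "nat \<Rightarrow> 'a::euclidean_space set \<Rightarrow> ('a \<Rightarrow> 'b::euclidean_space) \<Rightarrow> bool" where
  "Ck_on 0 U f = continuous_on U f"
| "Ck_on (Suc k) U f =
     (f differentiable_on U \<and> (\<forall>v. Ck_on k U (\<lambda>x. frechet_derivative f (at x) v)))"

definition smooth_on :: "'a::euclidean_space set \<Rightarrow> ('a \<Rightarrow> 'b::euclidean_space) \<Rightarrow> bool" where
  "smooth_on U f \<longleftrightarrow> (\<forall>k. Ck_on k U f)"

definition Dir :: "('a::real_normed_vector \<Rightarrow> 'b::real_normed_vector) \<Rightarrow> 'a \<Rightarrow> 'a \<Rightarrow> 'b" where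
  "Dir f x v = frechet_derivative f (at x) v"

definition gmet :: "real^('n::finite)^'n \<Rightarrow> real^'n \<Rightarrow> real^'n \<Rightarrow> real" where
  "gmet G X Y = X \<bullet> (G *v Y)"

definition riem_metric_at :: "real^('n::finite)^'n \<Rightarrow> bool" where
  "riem_metric_at G \<longleftrightarrow> transpose G = G \<and> (\<forall>X. X \<noteq> 0 \<longrightarrow> gmet G X X > 0)"

definition almost_complex_at :: "real^('n::finite)^'n \<Rightarrow> bool" where
  "almost_complex_at I \<longleftrightarrow> I ** I = - mat 1"

definition hermitian_at :: "real^('n::finite)^'n \<Rightarrow> real^'n^'n \<Rightarrow> bool" where
  "hermitian_at G I \<longleftrightarrow> (\<forall>X Y. gmet G (I *v X) (I *v Y) = gmet G X Y)"

definition lie_bracket :: "(real^('n::finite) \<Rightarrow> real^'n) \<Rightarrow> (real^'n \<Rightarrow> real^'n) \<Rightarrow> real^'n \<Rightarrow> real^'n" where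
  "lie_bracket X Y x = Dir Y x (X x) - Dir X x (Y x)"

definition nijenhuis :: "(real^('n::finite) \<Rightarrow> real^'n^'n) \<Rightarrow> (real^'n \<Rightarrow> real^'n) \<Rightarrow> (real^'n \<Rightarrow> real^'n)
    \<Rightarrow> real^'n \<Rightarrow> real^'n" where
  "nijenhuis I X Y x =
     (let IX = (\<lambda>p. I p *v X p); IY = (\<lambda>p. I p *v Y p) in
       lie_bracket IX IY x - I x *v lie_bracket IX Y x - I x *v lie_bracket X IY x
       - lie_bracket X Y x)"

definition cx_integrable_on :: "(real^('n::finite)) set \<Rightarrow> (real^'n \<Rightarrow> real^'n^'n) \<Rightarrow> bool" where
  "cx_integrable_on U I \<longleftrightarrow>
     (\<forall>X Y. smooth_on U X \<longrightarrow> smooth_on U Y \<longrightarrow> (\<forall>x\<in>U. nijenhuis I X Y x = 0))"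

type_synonym 'n form2 = "real^'n \<Rightarrow> real^'n \<Rightarrow> real^'n \<Rightarrow> real"
type_synonym 'n form3 = "real^'n \<Rightarrow> real^'n \<Rightarrow> real^'n \<Rightarrow> real^'n \<Rightarrow> real"

text \<open>Exterior derivative in flat coordinates (constant vector fields commute).\<close>
definition ext_d2 :: "('n::finite) form2 \<Rightarrow> 'n form3" where
  "ext_d2 \<alpha> x X Y Z =
     Dir (\<lambda>p. \<alpha> p Y Z) x X - Dir (\<lambda>p. \<alpha> p X Z) x Y + Dir (\<lambda>p. \<alpha> p X Y) x Z"

definition ext_d3 :: "('n::finite) form3 \<Rightarrow> real^'n \<Rightarrow> real^'n \<Rightarrow> real^'n \<Rightarrow> real^'n \<Rightarrow> real^'n \<Rightarrow> real" where
  "ext_d3 \<beta> x W X Y Z =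
     Dir (\<lambda>p. \<beta> p X Y Z) x W - Dir (\<lambda>p. \<beta> p W Y Z) x X
   + Dir (\<lambda>p. \<beta> p W X Z) x Y - Dir (\<lambda>p. \<beta> p W X Y) x Z"

definition kform :: "(real^('n::finite) \<Rightarrow> real^'n^'n) \<Rightarrow> (real^'n \<Rightarrow> real^'n^'n) \<Rightarrow> 'n form2" where
  "kform g I x X Y = gmet (g x) (I x *v X) Y"

text \<open>d^c_I = sqrt(-1)(dbar - d) written in real form as I^{-1} d I, where I acts on
  k-forms by (I a)(X_1,..,X_k) = a(I X_1,..,I X_k). On a 2-form a (so d a is a 3-form and
  I^{-1} = -I on 3-forms):  d^c a (X,Y,Z) = - d(I a)(IX,IY,IZ).\<close>
definition dc2 :: "(real^('n::finite) \<Rightarrow> real^'n^'n) \<Rightarrow> 'n form2 \<Rightarrow> 'n form3" where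
  "dc2 I \<alpha> x X Y Z =
     - ext_d2 (\<lambda>p U V. \<alpha> p (I p *v U) (I p *v V)) x (I x *v X) (I x *v Y) (I x *v Z)"

definition gen_kahler_on ::
  "(real^('n::finite)) set \<Rightarrow> (real^'n \<Rightarrow> real^'n^'n) \<Rightarrow> (real^'n \<Rightarrow> real^'n^'n) \<Rightarrow> (real^'n \<Rightarrow> real^'n^'n) \<Rightarrow> bool" where
  "gen_kahler_on U g I J \<longleftrightarrow>
     open U \<and> smooth_on U g \<and> smooth_on U I \<and> smooth_on U J \<and>
     (\<forall>x\<in>U. riem_metric_at (g x) \<and> almost_complex_at (I x) \<and> almost_complex_at (J x)
            \<and> hermitian_at (g x) (I x) \<and> hermitian_at (g x) (J x)) \<and>
     cx_integrable_on U I \<and> cx_integrable_on U J \<and>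
     (\<forall>x\<in>U. \<forall>X Y Z. dc2 I (kform g I) x X Y Z = - dc2 J (kform g J) x X Y Z) \<and>
     (\<forall>x\<in>U. \<forall>W X Y Z. ext_d3 (dc2 I (kform g I)) x W X Y Z = 0)"

text \<open>With G the metric matrix and e_i the coordinate basis,
  <a,b>_g = 1/2 sum_{i,j,k,l} G^{ik} G^{jl} a(e_i,e_j) b(e_k,e_l); for a g-orthonormal frame
  this is sum_{i<j} a(e_i,e_j) b(e_i,e_j).\<close>
definition inner2 :: "real^('n::finite)^'n \<Rightarrow> (real^'n \<Rightarrow> real^'n \<Rightarrow> real) \<Rightarrow> (real^'n \<Rightarrow> real^'n \<Rightarrow> real) \<Rightarrow> real" where
  "inner2 G a b = (1/2) * (\<Sum>i\<in>UNIV. \<Sum>j\<in>UNIV. \<Sum>k\<in>UNIV. \<Sum>l\<in>UNIV.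
      matrix_inv G $ i $ k * matrix_inv G $ j $ l * a (axis i 1) (axis j 1) * b (axis k 1) (axis l 1))"

definition bform :: "(real^('n::finite) \<Rightarrow> real^'n^'n) \<Rightarrow> (real^'n \<Rightarrow> real^'n^'n) \<Rightarrow> (real^'n \<Rightarrow> real^'n^'n) \<Rightarrow> 'n form2" where
  "bform g I J x X Y = - gmet (g x) ((matrix_inv (I x + J x) ** (I x - J x)) *v X) Y"

end

theory Submission
  imports Defs
begin

lemma gaud_abstract:
  fixes k gm :: "'v::real_vector \<Rightarrow> 'v \<Rightarrow> 'v \<Rightarrow> real" and Iv :: "'v \<Rightarrow> 'v"
  assumes II: "\<And>v. Iv (Iv v) = - v" and In: "\<And>v. Iv (- v) = - Iv v"
    and kn1: "\<And>a b c. k (-a) b c = - k a b c"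
    and kn2: "\<And>a b c. k a (-b) c = - k a b c"
    and kn3: "\<And>a b c. k a b (-c) = - k a b c"
    and gn1: "\<And>a b c. gm (-a) b c = - gm a b c"
    and gn2: "\<And>a b c. gm a (-b) c = - gm a b c"
    and gn3: "\<And>a b c. gm a b (-c) = - gm a b c"
    and gsym: "\<And>a b c. gm a b c = gm a c b"
    and C2: "\<And>a b c. k a (Iv b) c = k a b (Iv c)"
    and C4: "\<And>a b c. k a b (Iv c) + gm a (Iv b) (Iv c) + k a c (Iv b) = gm a b c"
    and C5: "\<And>a b c. k (Iv a) b c - k (Iv b) a c - k b a (Iv c) + k a b (Iv c) = 0"
  defines "dm \<equiv> \<lambda>w u v. - gm w u (Iv v) - k w v u"
  defines "H \<equiv> \<lambda>a b c. - (dm (Iv a) (Iv b) (Iv c) - dm (Iv b) (Iv a) (Iv c) + dm (Iv c) (Iv a) (Iv b))"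
  defines "cc \<equiv> \<lambda>a b c. (gm a b c + gm b a c - gm c a b) / 2"
  shows "k X Y Z + cc X (Iv Y) Z + cc X Y (Iv Z) = (H X (Iv Y) Z + H X Y (Iv Z)) / 2"
    and "H X Y Z = - H X Z Y"
proof -
  show "k X Y Z + cc X (Iv Y) Z + cc X Y (Iv Z) = (H X (Iv Y) Z + H X Y (Iv Z)) / 2"
    using C4[of "Iv X" Y Z] C5[of X "Iv Z" Y] C4[of X Y "Iv Z"] C4[of Y X "Iv Z"]
      C4[of "Iv Y" X Z] C5[of X Y "Iv Z"] C4[of Z X "Iv Y"] C4[of "Iv Z" X Y]
    unfolding H_def dm_def cc_def
    apply (simp add: II kn1 kn2 kn3 gn1 gn2 gn3 gsym In)
    apply (simp add: field_simps)
    done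
  show "H X Y Z = - H X Z Y"
    using C4[of "Iv X" Y "Iv Z"] C5[of X "Iv Y" "Iv Z"] C5[of X Y Z] C2[of X Y Z]
    unfolding H_def dm_def
    apply (simp add: II kn1 kn2 kn3 gn1 gn2 gn3 In gsym)
    done
qed


lemma mm_radd: "((A::real^'n^'m) + B) ** C = A ** C + B ** C"
  by (simp add: matrix_matrix_mult_def vec_eq_iff sum.distrib algebra_simps)
lemma mm_rsub: "((A::real^'n^'m) - B) ** C = A ** C - B ** C"
  by (simp add: matrix_matrix_mult_def vec_eq_iff sum_subtractf algebra_simps)
lemma mm_lsub: "(A::real^'n^'m) ** (B - C) = A ** B - A ** C"
  by (simp add: matrix_matrix_mult_def vec_eq_iff sum_subtractf algebra_simps)
lemma mm_lneg: "(- (A::real^'n^'m)) ** B = - (A ** B)"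
  by (simp add: matrix_matrix_mult_def vec_eq_iff sum_negf)
lemma mm_rneg: "(A::real^'n^'m) ** (- B) = - (A ** B)"
  by (simp add: matrix_matrix_mult_def vec_eq_iff sum_negf)
lemma trace_neg: "trace (- (A::real^'n^'n)) = - trace A"
  by (simp add: trace_def sum_negf)

lemmas mm_simps = matrix_add_ldistrib mm_radd mm_rsub mm_lsub mm_lneg mm_rneg

lemma trace_step:
  fixes Ii Jj T Gm Ai dIX dJX :: "real^'n^'n"
  assumes II: "Ii ** Ii = - mat 1" and JJ: "Jj ** Jj = - mat 1"
    and Ai1: "Ai ** (Ii + Jj) = mat 1" and Ai2: "(Ii + Jj) ** Ai = mat 1"
    and dI: "dIX = T ** Ii - Ii ** T - Gm ** Ii + Ii ** Gm"
    and dJ: "dJX = - (T ** Jj) + Jj ** T - Gm ** Jj + Jj ** Gm"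
  shows "trace (Ai ** (dIX + dJX)) = - 2 * trace ((Ai ** (Ii - Jj)) ** T)"
proof -
  define A where "A = Ii + Jj"
  define D where "D = Ii - Jj"
  have S: "dIX + dJX = (T ** D - D ** T) - (Gm ** A - A ** Gm)"
    unfolding dI dJ A_def D_def by (simp add: mm_simps algebra_simps)
  have AD: "A ** D = - (D ** A)"
    unfolding A_def D_def using II JJ by (simp add: mm_simps algebra_simps)
  have DA: "D ** Ai = - (Ai ** D)"
  proof -
    have "D ** Ai = Ai ** (A ** D) ** Ai"
      using Ai1 Ai2 unfolding A_def by (simp add: matrix_mul_assoc)
    also have "\<dots> = Ai ** (- (D ** A)) ** Ai" by (simp only: AD)
    also have "\<dots> = - ((Ai ** D) ** (A ** Ai))" by (simp add: mm_simps matrix_mul_assoc)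
    also have "\<dots> = - (Ai ** D)" using Ai2 unfolding A_def by simp
    finally show ?thesis .
  qed
  have t1: "trace (Ai ** (Gm ** A - A ** Gm)) = 0"
  proof -
    have "trace (Ai ** (Gm ** A)) = trace Gm"
      using trace_mul_sym[of "Ai ** Gm" A] Ai2 unfolding A_def by (simp add: matrix_mul_assoc)
    moreover have "trace (Ai ** (A ** Gm)) = trace Gm"
      using Ai1 unfolding A_def by (simp add: matrix_mul_assoc)
    ultimately show ?thesis by (simp add: mm_simps trace_sub)
  qed
  have t2: "trace (Ai ** (T ** D - D ** T)) = - 2 * trace ((Ai ** D) ** T)"
  proof -
    have "trace (Ai ** (T ** D)) = trace ((D ** Ai) ** T)"
      using trace_mul_sym[of "Ai ** T" D] by (simp add: matrix_mul_assoc)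
    also have "\<dots> = - trace ((Ai ** D) ** T)" by (simp add: DA mm_simps trace_neg)
    finally have "trace (Ai ** (T ** D)) = - trace ((Ai ** D) ** T)" .
    then show ?thesis by (simp add: mm_simps trace_sub matrix_mul_assoc)
  qed
  show ?thesis
    unfolding S using t1 t2 by (simp add: mm_simps trace_sub D_def)
qed


lemma swap4:
  fixes f :: "'i::finite \<Rightarrow> 'i \<Rightarrow> 'i \<Rightarrow> 'i \<Rightarrow> real"
  shows "(\<Sum>i\<in>UNIV. \<Sum>j\<in>UNIV. \<Sum>k\<in>UNIV. \<Sum>l\<in>UNIV. f i j k l) = (\<Sum>k\<in>UNIV. \<Sum>l\<in>UNIV. \<Sum>i\<in>UNIV. \<Sum>j\<in>UNIV. f i j k l)"
proof -
  have "(\<Sum>i\<in>UNIV. \<Sum>j\<in>UNIV. \<Sum>k\<in>UNIV. \<Sum>l\<in>UNIV. f i j k l) = (\<Sum>i\<in>UNIV. \<Sum>k\<in>UNIV. \<Sum>j\<in>UNIV. \<Sum>l\<in>UNIV. f i j k l)"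
    by (rule sum.cong[OF refl], rule sum.swap)
  also have "\<dots> = (\<Sum>k\<in>UNIV. \<Sum>i\<in>UNIV. \<Sum>j\<in>UNIV. \<Sum>l\<in>UNIV. f i j k l)"
    by (rule sum.swap)
  also have "\<dots> = (\<Sum>k\<in>UNIV. \<Sum>i\<in>UNIV. \<Sum>l\<in>UNIV. \<Sum>j\<in>UNIV. f i j k l)"
    by (rule sum.cong[OF refl], rule sum.cong[OF refl], rule sum.swap)
  also have "\<dots> = (\<Sum>k\<in>UNIV. \<Sum>l\<in>UNIV. \<Sum>i\<in>UNIV. \<Sum>j\<in>UNIV. f i j k l)"
    by (rule sum.cong[OF refl], rule sum.swap)
  finally show ?thesis .
qed

lemma frob4:
  fixes P A B :: "real^'n^'n"
  shows "(\<Sum>i\<in>UNIV. \<Sum>j\<in>UNIV. \<Sum>k\<in>UNIV. \<Sum>l\<in>UNIV. P$i$k * P$j$l * A$i$j * B$k$l)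
       = trace (transpose (transpose P ** A ** P) ** B)"
proof -
  have t0: "trace (transpose (transpose P ** A ** P) ** B) = (\<Sum>k\<in>UNIV. \<Sum>l\<in>UNIV. (\<Sum>j\<in>UNIV. (\<Sum>i\<in>UNIV. P$i$k * A$i$j) * P$j$l) * B$k$l)"
    by (simp add: trace_def matrix_matrix_mult_def transpose_def) (rule sum.swap)
  also have "\<dots> = (\<Sum>k\<in>UNIV. \<Sum>l\<in>UNIV. \<Sum>i\<in>UNIV. \<Sum>j\<in>UNIV. P$i$k * P$j$l * A$i$j * B$k$l)"
    apply (simp add: sum_distrib_left sum_distrib_right)
    apply (rule sum.cong[OF refl], rule sum.cong[OF refl])
    apply (subst sum.swap) apply (simp add: mult_ac)
    done
  finally have t: "trace (transpose (transpose P ** A ** P) ** B) = (\<Sum>k\<in>UNIV. \<Sum>l\<in>UNIV. \<Sum>i\<in>UNIV. \<Sum>j\<in>UNIV. P$i$k * P$j$l * A$i$j * B$k$l)" .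
  show ?thesis unfolding t by (rule swap4)
qed

lemma minv:
  fixes A :: "real^'n^'n"
  assumes "invertible A"
  shows "A ** matrix_inv A = mat 1" "matrix_inv A ** A = mat 1"
  using assms unfolding invertible_def matrix_inv_def by (metis (mono_tags, lifting) someI_ex)+

lemma minv_unique:
  fixes A B :: "real^'n^'n"
  assumes "invertible A" "B ** A = mat 1"
  shows "B = matrix_inv A"
proof -
  have "B = B ** (A ** matrix_inv A)" using minv[OF assms(1)] by simp
  also have "\<dots> = matrix_inv A" by (simp add: matrix_mul_assoc assms(2))
  finally show ?thesis .
qed

lemma transpose_minv_sym:
  fixes G :: "real^'n^'n"
  assumes "transpose G = G" "invertible G"
  shows "transpose (matrix_inv G) = matrix_inv G"
proof (rule minv_unique[OF assms(2)])
  have "transpose (matrix_inv G) ** G = transpose (G ** matrix_inv G)"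
    by (metis assms(1) matrix_transpose_mul)
  then show "transpose (matrix_inv G) ** G = mat 1" using minv[OF assms(2)] by simp
qed

lemma mv_axis: "((M::real^'n^'m) *v axis l 1) $ k = M$k$l"
  unfolding matrix_vector_mult_def axis_def by (simp add: if_distrib[of "(*) _"] cong: if_cong)

lemma axis_form: "axis k (1::real) \<bullet> (M *v axis l 1) = M$k$l"
  by (simp only: inner_axis' mv_axis) simp

lemma mv_axis_inner: "((M::real^'n^'n) *v axis i 1) \<bullet> (G *v axis j 1) = (transpose M ** G)$i$j"
  by (simp add: inner_vec_def mv_axis matrix_matrix_mult_def transpose_def)

lemma trace_scale: "trace (c *\<^sub>R (A::real^'n^'n)) = c * trace A"
  by (simp add: trace_def sum_distrib_left)

lemma transpose_neg: "transpose (- (A::real^'n^'m)) = - transpose A"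
  by (simp add: transpose_def vec_eq_iff)

lemma inner2_trace:
  fixes G M Hm :: "real^'n^'n"
  assumes Gs: "transpose G = G" and Gi: "invertible G" and Hs: "transpose Hm = - Hm"
  shows "inner2 G (\<lambda>Y Z. - gmet G (M *v Y) Z) (\<lambda>Y Z. 2 * (Z \<bullet> (Hm *v Y)))
         = trace (M ** matrix_inv G ** Hm)"
proof -
  define P where "P = matrix_inv G"
  define Am where "Am = - (transpose M ** G)"
  define Bm where "Bm = 2 *\<^sub>R transpose Hm"
  have PT: "transpose P = P" unfolding P_def by (rule transpose_minv_sym[OF Gs Gi])
  have PG: "P ** G = mat 1" unfolding P_def by (rule minv(2)[OF Gi])
  have "inner2 G (\<lambda>Y Z. - gmet G (M *v Y) Z) (\<lambda>Y Z. 2 * (Z \<bullet> (Hm *v Y)))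
     = (1/2) * (\<Sum>i\<in>UNIV. \<Sum>j\<in>UNIV. \<Sum>k\<in>UNIV. \<Sum>l\<in>UNIV. P$i$k * P$j$l * Am$i$j * Bm$k$l)"
    unfolding inner2_def gmet_def P_def Am_def Bm_def
    by (simp add: mv_axis_inner axis_form transpose_def)
  also have "\<dots> = (1/2) * trace (transpose (transpose P ** Am ** P) ** Bm)"
    by (simp add: frob4)
  also have "transpose (transpose P ** Am ** P) = - (M ** P)"
  proof -
    have "transpose (transpose P ** Am ** P) = transpose P ** transpose Am ** transpose (transpose P)"
      by (simp add: matrix_transpose_mul matrix_mul_assoc)
    also have "\<dots> = - ((P ** G) ** M ** P)"
      by (simp add: PT Am_def transpose_neg matrix_transpose_mul Gs mm_simps matrix_mul_assoc)
    finally show ?thesis by (simp add: PG)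
  qed
  also have "(1/2) * trace (- (M ** P) ** Bm) = trace (M ** P ** Hm)"
    by (simp add: Bm_def Hs matrix_scalar_ac mm_simps trace_neg trace_scale matrix_mul_assoc scalar_matrix_assoc[symmetric])
  finally show ?thesis unfolding P_def .
qed


definition DWf :: "real^'n^'n \<Rightarrow> real^'n^'n \<Rightarrow> (real^'n \<Rightarrow> real^'n^'n) \<Rightarrow> (real^'n \<Rightarrow> real^'n^'n)
    \<Rightarrow> real^'n \<Rightarrow> real^'n \<Rightarrow> real^'n \<Rightarrow> real" where
  "DWf G K dG dK W U V = - (U \<bullet> (dG W *v (K *v V))) - U \<bullet> (G *v (dK W *v V))"

definition HHf :: "real^'n^'n \<Rightarrow> real^'n^'n \<Rightarrow> (real^'n \<Rightarrow> real^'n^'n) \<Rightarrow> (real^'n \<Rightarrow> real^'n^'n)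
    \<Rightarrow> real^'n \<Rightarrow> real^'n \<Rightarrow> real^'n \<Rightarrow> real" where
  "HHf G K dG dK X Y Z = - (DWf G K dG dK (K *v X) (K *v Y) (K *v Z)
      - DWf G K dG dK (K *v Y) (K *v X) (K *v Z) + DWf G K dG dK (K *v Z) (K *v X) (K *v Y))"

definition CCf :: "(real^'n \<Rightarrow> real^'n^'n) \<Rightarrow> real^'n \<Rightarrow> real^'n \<Rightarrow> real^'n \<Rightarrow> real" where
  "CCf dG X Y Z = (Y \<bullet> (dG X *v Z) + X \<bullet> (dG Y *v Z) - X \<bullet> (dG Z *v Y)) / 2"

lemma mv_neg: "(- (A::real^'n^'m)) *v v = - (A *v v)"
  by (simp add: matrix_vector_mult_def vec_eq_iff sum_negf)

lemma mv_rneg: "(A::real^'n^'m) *v (- v) = - (A *v v)"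
  by (simp add: matrix_vector_mult_def vec_eq_iff sum_negf)

lemma sym_form:
  fixes A :: "real^'n^'n"
  assumes "transpose A = A"
  shows "Y \<bullet> (A *v Z) = Z \<bullet> (A *v Y)"
proof -
  have "Y \<bullet> (A *v Z) = (Y v* A) \<bullet> Z" by (simp add: dot_lmul_matrix)
  also have "Y v* A = transpose A *v Y" by simp
  finally show ?thesis using assms by (simp add: inner_commute)
qed

lemma gaud_concrete:
  fixes G K :: "real^'n^'n" and dG dK :: "real^'n \<Rightarrow> real^'n^'n"
  assumes Gs: "transpose G = G"
    and KK: "K ** K = - mat 1"
    and hK: "\<forall>X Y. gmet G (K *v X) (K *v Y) = gmet G X Y"
    and lG: "linear dG" and lK: "linear dK"
    and dGs: "\<forall>W. transpose (dG W) = dG W"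
    and dKK: "\<forall>W. dK W ** K + K ** dK W = 0"
    and dhK: "\<forall>W X Y. (dK W *v X) \<bullet> (G *v (K *v Y)) + (K *v X) \<bullet> (dG W *v (K *v Y))
                 + (K *v X) \<bullet> (G *v (dK W *v Y)) = X \<bullet> (dG W *v Y)"
    and nK: "\<forall>X Y. dK (K *v X) *v Y - dK (K *v Y) *v X + K *v (dK Y *v X) - K *v (dK X *v Y) = 0"
  shows "(dK X *v Y) \<bullet> (G *v Z) + CCf dG X (K *v Y) Z + CCf dG X Y (K *v Z)
           = (HHf G K dG dK X (K *v Y) Z + HHf G K dG dK X Y (K *v Z)) / 2"
    and "HHf G K dG dK X Y Z = - HHf G K dG dK X Z Y"
proof -
  define k where "k = (\<lambda>W Y Z. (dK W *v Y) \<bullet> (G *v Z))"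
  define gm where "gm = (\<lambda>W Y Z. Y \<bullet> (dG W *v Z))"
  define Iv where "Iv = (\<lambda>v. K *v v)"
  have II: "\<And>v. Iv (Iv v) = - v"
    unfolding Iv_def by (simp add: matrix_vector_mul_assoc KK mv_neg)
  have In: "\<And>v. Iv (- v) = - Iv v" unfolding Iv_def by (simp add: mv_rneg)
  have kn1: "\<And>a b c. k (-a) b c = - k a b c"
    unfolding k_def by (simp add: linear_neg[OF lK] mv_neg)
  have kn2: "\<And>a b c. k a (-b) c = - k a b c"
    unfolding k_def by (simp add: mv_rneg)
  have kn3: "\<And>a b c. k a b (-c) = - k a b c"
    unfolding k_def by (simp add: mv_rneg)
  have gn1: "\<And>a b c. gm (-a) b c = - gm a b c"
    unfolding gm_def by (simp add: linear_neg[OF lG] mv_neg)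
  have gn2: "\<And>a b c. gm a (-b) c = - gm a b c"
    unfolding gm_def by (simp add: mv_rneg)
  have gn3: "\<And>a b c. gm a b (-c) = - gm a b c"
    unfolding gm_def by (simp add: mv_rneg)
  have gsym: "\<And>a b c. gm a b c = gm a c b"
    unfolding gm_def using dGs sym_form by blast
  have Gsym: "\<And>u v. u \<bullet> (G *v v) = v \<bullet> (G *v u)" using sym_form[OF Gs] by blast
  have anti: "\<And>u c. (K *v u) \<bullet> (G *v c) = - (u \<bullet> (G *v (K *v c)))"
  proof -
    fix u c
    have "gmet G (K *v u) (K *v (K *v c)) = gmet G u (K *v c)" using hK by blast
    then show "(K *v u) \<bullet> (G *v c) = - (u \<bullet> (G *v (K *v c)))"
      by (simp add: gmet_def matrix_vector_mul_assoc KK mv_neg mv_rneg)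
  qed
  have C2: "\<And>a b c. k a (Iv b) c = k a b (Iv c)"
  proof -
    fix a b c
    have "dK a *v (K *v b) = - (K *v (dK a *v b))"
    proof -
      have "dK a ** K = - (K ** dK a)" using dKK by (simp add: eq_neg_iff_add_eq_0)
      then show ?thesis by (simp add: matrix_vector_mul_assoc mv_neg)
    qed
    then show "k a (Iv b) c = k a b (Iv c)"
      unfolding k_def Iv_def by (simp add: anti)
  qed
  have C4: "\<And>a b c. k a b (Iv c) + gm a (Iv b) (Iv c) + k a c (Iv b) = gm a b c"
    unfolding k_def gm_def Iv_def using dhK Gsym by metis
  have C5: "\<And>a b c. k (Iv a) b c - k (Iv b) a c - k b a (Iv c) + k a b (Iv c) = 0"
  proof -
    fix a b c
    have "(dK (K *v a) *v b - dK (K *v b) *v a + K *v (dK b *v a) - K *v (dK a *v b)) \<bullet> (G *v c) = 0"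
      using nK by simp
    then show "k (Iv a) b c - k (Iv b) a c - k b a (Iv c) + k a b (Iv c) = 0"
      unfolding k_def Iv_def by (simp add: inner_diff_left inner_add_left anti)
  qed
  have HH: "\<And>X Y Z. HHf G K dG dK X Y Z =
     - ((- gm (Iv X) (Iv Y) (Iv (Iv Z)) - k (Iv X) (Iv Z) (Iv Y))
        - (- gm (Iv Y) (Iv X) (Iv (Iv Z)) - k (Iv Y) (Iv Z) (Iv X))
        + (- gm (Iv Z) (Iv X) (Iv (Iv Y)) - k (Iv Z) (Iv Y) (Iv X)))"
    unfolding HHf_def DWf_def k_def gm_def Iv_def using Gsym by metis
  have CC: "\<And>X Y Z. CCf dG X Y Z = (gm X Y Z + gm Y X Z - gm Z X Y) / 2"
    by (simp add: CCf_def gm_def)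
  note GA = gaud_abstract[of Iv k gm, OF II In kn1 kn2 kn3 gn1 gn2 gn3 gsym C2 C4 C5]
  have "k X Y Z + CCf dG X (Iv Y) Z + CCf dG X Y (Iv Z)
           = (HHf G K dG dK X (Iv Y) Z + HHf G K dG dK X Y (Iv Z)) / 2"
    unfolding HH CC using GA(1)[of X Y Z] by simp
  then show "(dK X *v Y) \<bullet> (G *v Z) + CCf dG X (K *v Y) Z + CCf dG X Y (K *v Z)
           = (HHf G K dG dK X (K *v Y) Z + HHf G K dG dK X Y (K *v Z)) / 2"
    unfolding k_def Iv_def by simp
  show "HHf G K dG dK X Y Z = - HHf G K dG dK X Z Y"
    unfolding HH using GA(2)[of X Y Z] by simp
qed


context
  fixes G K :: "real^'n^'n" and dG dK :: "real^'n \<Rightarrow> real^'n^'n"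
  assumes lG: "linear dG" and lK: "linear dK"
begin

lemma DW_addW: "DWf G K dG dK (W1 + W2) U V = DWf G K dG dK W1 U V + DWf G K dG dK W2 U V"
  by (simp add: DWf_def linear_add[OF lG] linear_add[OF lK] matrix_vector_mult_add_rdistrib
      matrix_vector_right_distrib inner_add_right algebra_simps)
lemma DW_scW: "DWf G K dG dK (c *\<^sub>R W) U V = c * DWf G K dG dK W U V"
  by (simp add: DWf_def linear_scale[OF lG] linear_scale[OF lK] scaleR_matrix_vector_assoc[symmetric]
      matrix_vector_mult_scaleR algebra_simps)
lemma DW_addU: "DWf G K dG dK W (U1 + U2) V = DWf G K dG dK W U1 V + DWf G K dG dK W U2 V"
  by (simp add: DWf_def inner_add_left algebra_simps)
lemma DW_scU: "DWf G K dG dK W (c *\<^sub>R U) V = c * DWf G K dG dK W U V"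
  by (simp add: DWf_def algebra_simps)
lemma DW_addV: "DWf G K dG dK W U (V1 + V2) = DWf G K dG dK W U V1 + DWf G K dG dK W U V2"
  by (simp add: DWf_def matrix_vector_right_distrib inner_add_right algebra_simps)
lemma DW_scV: "DWf G K dG dK W U (c *\<^sub>R V) = c * DWf G K dG dK W U V"
  by (simp add: DWf_def matrix_vector_mult_scaleR algebra_simps)

lemmas DW_lin = DW_addW DW_scW DW_addU DW_scU DW_addV DW_scV

lemma lin_HH_Y: "linear (\<lambda>Y. HHf G K dG dK X Y Z)"
  by (rule linearI) (simp_all add: HHf_def DW_lin matrix_vector_right_distrib matrix_vector_mult_scaleR algebra_simps)
lemma lin_HH_Z: "linear (\<lambda>Z. HHf G K dG dK X Y Z)"
  by (rule linearI) (simp_all add: HHf_def DW_lin matrix_vector_right_distrib matrix_vector_mult_scaleR algebra_simps)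

end

lemma lin_CC_Y: assumes lG: "linear dG" shows "linear (\<lambda>Y. CCf dG X Y Z)"
proof (rule linearI)
  fix a b show "CCf dG X (a + b) Z = CCf dG X a Z + CCf dG X b Z"
    by (simp add: CCf_def linear_add[OF lG] matrix_vector_mult_add_rdistrib matrix_vector_right_distrib
        inner_add_left inner_add_right field_simps)
next
  fix r b show "CCf dG X (r *\<^sub>R b) Z = r *\<^sub>R CCf dG X b Z"
    by (simp add: CCf_def linear_scale[OF lG] scaleR_matrix_vector_assoc[symmetric] matrix_vector_mult_scaleR field_simps)
qed
lemma lin_CC_Z: assumes lG: "linear dG" shows "linear (\<lambda>Z. CCf dG X Y Z)"
proof (rule linearI)
  fix a b show "CCf dG X Y (a + b) = CCf dG X Y a + CCf dG X Y b"
    by (simp add: CCf_def linear_add[OF lG] matrix_vector_mult_add_rdistrib matrix_vector_right_distrib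
        inner_add_left inner_add_right field_simps)
next
  fix r b show "CCf dG X Y (r *\<^sub>R b) = r *\<^sub>R CCf dG X Y b"
    by (simp add: CCf_def linear_scale[OF lG] scaleR_matrix_vector_assoc[symmetric] matrix_vector_mult_scaleR field_simps)
qed


lemma mat_eq_forms:
  fixes M N :: "real^'n^'n"
  assumes "\<And>Y Z. Z \<bullet> (M *v Y) = Z \<bullet> (N *v Y)"
  shows "M = N"
  using assms[of "axis _ 1" "axis _ 1"] by (simp add: axis_form vec_eq_iff)

lemma lin_expand:
  fixes f :: "real^'n \<Rightarrow> real"
  assumes "linear f"
  shows "f Y = (\<Sum>l\<in>UNIV. Y$l * f (axis l 1))"
proof -
  have "f Y = f (\<Sum>l\<in>UNIV. (Y$l) *s axis l 1)" by (simp add: basis_expansion)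
  also have "\<dots> = (\<Sum>l\<in>UNIV. Y$l * f (axis l 1))"
    using assms by (simp add: linear_sum linear_scale scalar_mult_eq_scaleR)
  finally show ?thesis .
qed

definition bmat :: "(real^'n \<Rightarrow> real^'n \<Rightarrow> real) \<Rightarrow> real^'n^'n" where
  "bmat \<beta> = (\<chi> k l. \<beta> (axis l 1) (axis k 1))"

lemma bmat:
  fixes \<beta> :: "real^'n \<Rightarrow> real^'n \<Rightarrow> real"
  assumes l1: "\<And>Z. linear (\<lambda>Y. \<beta> Y Z)" and l2: "\<And>Y. linear (\<lambda>Z. \<beta> Y Z)"
  shows "Z \<bullet> (bmat \<beta> *v Y) = \<beta> Y Z"
proof -
  have "\<beta> Y Z = (\<Sum>l\<in>UNIV. Y$l * \<beta> (axis l 1) Z)"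
    using lin_expand[OF l1] .
  also have "\<dots> = (\<Sum>l\<in>UNIV. Y$l * (\<Sum>k\<in>UNIV. Z$k * \<beta> (axis l 1) (axis k 1)))"
    using lin_expand[OF l2] by metis
  also have "\<dots> = (\<Sum>k\<in>UNIV. Z$k * (\<Sum>l\<in>UNIV. \<beta> (axis l 1) (axis k 1) * Y$l))"
    by (simp add: sum_distrib_left mult_ac) (rule sum.swap)
  also have "\<dots> = Z \<bullet> (bmat \<beta> *v Y)"
    by (simp add: bmat_def inner_vec_def matrix_vector_mult_def)
  finally show ?thesis by simp
qed

lemma mv_inner_transpose: "((A::real^'n^'n) *v Z) \<bullet> w = Z \<bullet> (transpose A *v w)"
  by (metis dot_lmul_matrix inner_commute transpose_matrix_vector)

lemma mv_scale_mat: "(c *\<^sub>R (A::real^'n^'n)) *v v = c *\<^sub>R (A *v v)"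
  by (simp add: scaleR_matrix_vector_assoc)

lemma gaud_matrix:
  fixes G K :: "real^'n^'n" and dG dK :: "real^'n \<Rightarrow> real^'n^'n" and X :: "real^'n"
  assumes Gs: "transpose G = G" and Gi: "invertible G"
    and KK: "K ** K = - mat 1"
    and hK: "\<forall>X Y. gmet G (K *v X) (K *v Y) = gmet G X Y"
    and lG: "linear dG" and lK: "linear dK"
    and dGs: "\<forall>W. transpose (dG W) = dG W"
    and dKK: "\<forall>W. dK W ** K + K ** dK W = 0"
    and dhK: "\<forall>W X Y. (dK W *v X) \<bullet> (G *v (K *v Y)) + (K *v X) \<bullet> (dG W *v (K *v Y))
                 + (K *v X) \<bullet> (G *v (dK W *v Y)) = X \<bullet> (dG W *v Y)"
    and nK: "\<forall>X Y. dK (K *v X) *v Y - dK (K *v Y) *v X + K *v (dK Y *v X) - K *v (dK X *v Y) = 0"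
  defines "Hm \<equiv> bmat (\<lambda>Y Z. HHf G K dG dK X Y Z)"
    and "Cm \<equiv> bmat (\<lambda>Y Z. CCf dG X Y Z)"
  shows "dK X = ((1/2) *\<^sub>R (matrix_inv G ** Hm)) ** K - K ** ((1/2) *\<^sub>R (matrix_inv G ** Hm))
                - (matrix_inv G ** Cm) ** K + K ** (matrix_inv G ** Cm)"
    and "transpose Hm = - Hm"
    and "\<And>Y Z. Z \<bullet> (Hm *v Y) = HHf G K dG dK X Y Z"
proof -
  note GC = gaud_concrete[OF Gs KK hK lG lK dGs dKK dhK nK]
  have Hf: "\<And>Y Z. Z \<bullet> (Hm *v Y) = HHf G K dG dK X Y Z"
    unfolding Hm_def by (rule bmat) (rule lin_HH_Y[OF lG lK], rule lin_HH_Z[OF lG lK])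
  then show "\<And>Y Z. Z \<bullet> (Hm *v Y) = HHf G K dG dK X Y Z" .
  have Cf: "\<And>Y Z. Z \<bullet> (Cm *v Y) = CCf dG X Y Z"
    unfolding Cm_def by (rule bmat) (rule lin_CC_Y[OF lG], rule lin_CC_Z[OF lG])
  show "transpose Hm = - Hm"
    unfolding Hm_def bmat_def transpose_def by (simp add: vec_eq_iff, metis GC(2))
  define Gv where "Gv = matrix_inv G"
  have GvG: "Gv ** G = mat 1" and GGv: "G ** Gv = mat 1" unfolding Gv_def using minv[OF Gi] by auto
  have Gsym: "\<And>u v. u \<bullet> (G *v v) = v \<bullet> (G *v u)" using sym_form[OF Gs] by blast
  have anti: "\<And>u c. (K *v u) \<bullet> (G *v c) = - (u \<bullet> (G *v (K *v c)))"
  proof -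
    fix u c
    have "gmet G (K *v u) (K *v (K *v c)) = gmet G u (K *v c)" using hK by blast
    then show "(K *v u) \<bullet> (G *v c) = - (u \<bullet> (G *v (K *v c)))"
      by (simp add: gmet_def matrix_vector_mul_assoc KK mv_neg mv_rneg)
  qed
  have KtG: "transpose K ** G = - (G ** K)"
  proof (rule mat_eq_forms)
    fix Y Z
    have "Z \<bullet> ((transpose K ** G) *v Y) = (K *v Z) \<bullet> (G *v Y)"
      by (simp add: mv_inner_transpose matrix_vector_mul_assoc[symmetric])
    also have "\<dots> = - (Z \<bullet> (G *v (K *v Y)))" by (rule anti)
    finally show "Z \<bullet> ((transpose K ** G) *v Y) = Z \<bullet> (- (G ** K) *v Y)"
      by (simp add: mv_neg matrix_vector_mul_assoc)
  qed
  have GvKt: "Gv ** transpose K = - (K ** Gv)"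
  proof -
    have "Gv ** transpose K = Gv ** (transpose K ** G) ** Gv"
      by (simp add: matrix_mul_assoc[symmetric] GGv)
    also have "\<dots> = - ((Gv ** G) ** K ** Gv)" by (simp add: KtG mm_simps matrix_mul_assoc)
    finally show ?thesis by (simp add: GvG)
  qed
  have M: "G ** dK X + Cm ** K + transpose K ** Cm = (1/2) *\<^sub>R (Hm ** K + transpose K ** Hm)"
  proof (rule mat_eq_forms)
    fix Y Z
    have e: "(dK X *v Y) \<bullet> (G *v Z) + CCf dG X (K *v Y) Z + CCf dG X Y (K *v Z)
           = (HHf G K dG dK X (K *v Y) Z + HHf G K dG dK X Y (K *v Z)) / 2" by (rule GC(1))
    have l: "Z \<bullet> ((G ** dK X + Cm ** K + transpose K ** Cm) *v Y)
        = (dK X *v Y) \<bullet> (G *v Z) + CCf dG X (K *v Y) Z + CCf dG X Y (K *v Z)"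
      by (simp add: matrix_vector_mult_add_rdistrib inner_add_right matrix_vector_mul_assoc[symmetric]
           Cf mv_inner_transpose[symmetric] Gsym[of Z] del: transpose_matrix_vector)
    have r: "Z \<bullet> (((1/2) *\<^sub>R (Hm ** K + transpose K ** Hm)) *v Y)
        = (HHf G K dG dK X (K *v Y) Z + HHf G K dG dK X Y (K *v Z)) / 2"
      by (simp add: mv_scale_mat matrix_vector_mult_add_rdistrib inner_add_right matrix_vector_mul_assoc[symmetric]
           Hf mv_inner_transpose[symmetric] del: transpose_matrix_vector)
    show "Z \<bullet> ((G ** dK X + Cm ** K + transpose K ** Cm) *v Y) = Z \<bullet> (((1/2) *\<^sub>R (Hm ** K + transpose K ** Hm)) *v Y)"
      using e l r by simp
  qed
  have "dK X = Gv ** (G ** dK X)" by (simp add: matrix_mul_assoc GvG)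
  also have "\<dots> = Gv ** ((1/2) *\<^sub>R (Hm ** K + transpose K ** Hm) - Cm ** K - transpose K ** Cm)"
    unfolding M[symmetric] by simp
  also have "\<dots> = ((1/2) *\<^sub>R (Gv ** Hm)) ** K - K ** ((1/2) *\<^sub>R (Gv ** Hm))
                - (Gv ** Cm) ** K + K ** (Gv ** Cm)"
    by (simp add: mm_simps matrix_scalar_ac scalar_matrix_assoc[symmetric] matrix_mul_assoc GvKt
        scaleR_add_right scaleR_minus_right)
  finally show "dK X = ((1/2) *\<^sub>R (matrix_inv G ** Hm)) ** K - K ** ((1/2) *\<^sub>R (matrix_inv G ** Hm))
                - (matrix_inv G ** Cm) ** K + K ** (matrix_inv G ** Cm)" unfolding Gv_def .
qed


lemma transpose_scale: "transpose (c *\<^sub>R (A::real^'n^'m)) = c *\<^sub>R transpose A"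
  by (simp add: transpose_def vec_eq_iff)

lemma alg_main:
  fixes G Ii Jj :: "real^'n^'n" and dG dI dJ :: "real^'n \<Rightarrow> real^'n^'n" and X :: "real^'n"
  assumes Gs: "transpose G = G" and Gi: "invertible G"
    and II: "Ii ** Ii = - mat 1" and JJ: "Jj ** Jj = - mat 1"
    and hI: "\<forall>X Y. gmet G (Ii *v X) (Ii *v Y) = gmet G X Y"
    and hJ: "\<forall>X Y. gmet G (Jj *v X) (Jj *v Y) = gmet G X Y"
    and lG: "linear dG" and lI: "linear dI" and lJ: "linear dJ"
    and dGs: "\<forall>W. transpose (dG W) = dG W"
    and dII: "\<forall>W. dI W ** Ii + Ii ** dI W = 0"
    and dJJ: "\<forall>W. dJ W ** Jj + Jj ** dJ W = 0"
    and dhI: "\<forall>W X Y. (dI W *v X) \<bullet> (G *v (Ii *v Y)) + (Ii *v X) \<bullet> (dG W *v (Ii *v Y))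
                 + (Ii *v X) \<bullet> (G *v (dI W *v Y)) = X \<bullet> (dG W *v Y)"
    and dhJ: "\<forall>W X Y. (dJ W *v X) \<bullet> (G *v (Jj *v Y)) + (Jj *v X) \<bullet> (dG W *v (Jj *v Y))
                 + (Jj *v X) \<bullet> (G *v (dJ W *v Y)) = X \<bullet> (dG W *v Y)"
    and nI: "\<forall>X Y. dI (Ii *v X) *v Y - dI (Ii *v Y) *v X + Ii *v (dI Y *v X) - Ii *v (dI X *v Y) = 0"
    and nJ: "\<forall>X Y. dJ (Jj *v X) *v Y - dJ (Jj *v Y) *v X + Jj *v (dJ Y *v X) - Jj *v (dJ X *v Y) = 0"
    and Hc: "\<forall>X Y Z. HHf G Ii dG dI X Y Z = - HHf G Jj dG dJ X Y Z"
    and dA: "det (Ii + Jj) \<noteq> 0"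
  shows "trace (matrix_inv (Ii + Jj) ** (dI X + dJ X))
     = - 2 * inner2 G (\<lambda>Y Z. - gmet G ((matrix_inv (Ii + Jj) ** (Ii - Jj)) *v Y) Z)
                      (\<lambda>Y Z. HHf G Ii dG dI X Y Z)"
proof -
  define HmI where "HmI = bmat (\<lambda>Y Z. HHf G Ii dG dI X Y Z)"
  define HmJ where "HmJ = bmat (\<lambda>Y Z. HHf G Jj dG dJ X Y Z)"
  define Cm where "Cm = bmat (\<lambda>Y Z. CCf dG X Y Z)"
  define Gv where "Gv = matrix_inv G"
  define T where "T = (1/2) *\<^sub>R (Gv ** HmI)"
  define Ai where "Ai = matrix_inv (Ii + Jj)"
  note GI = gaud_matrix[OF Gs Gi II hI lG lI dGs dII dhI nI, where X=X, folded HmI_def Cm_def Gv_def]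
  note GJ = gaud_matrix[OF Gs Gi JJ hJ lG lJ dGs dJJ dhJ nJ, where X=X, folded HmJ_def Cm_def Gv_def]
  have HmJ: "HmJ = - HmI"
    unfolding HmI_def HmJ_def bmat_def using Hc by (simp add: vec_eq_iff)
  have invA: "invertible (Ii + Jj)" using dA invertible_det_nz by blast
  have dIX: "dI X = T ** Ii - Ii ** T - (Gv ** Cm) ** Ii + Ii ** (Gv ** Cm)"
    using GI(1) unfolding T_def .
  have dJX: "dJ X = - (T ** Jj) + Jj ** T - (Gv ** Cm) ** Jj + Jj ** (Gv ** Cm)"
    using GJ(1) unfolding T_def HmJ by (simp add: mm_simps scaleR_minus_right)
  have lhs: "trace (Ai ** (dI X + dJ X)) = - 2 * trace ((Ai ** (Ii - Jj)) ** T)"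
    by (rule trace_step[OF II JJ _ _ dIX dJX]) (use minv[OF invA] in \<open>simp_all add: Ai_def\<close>)
  have h: "(\<lambda>Y Z. HHf G Ii dG dI X Y Z) = (\<lambda>Y Z. 2 * (Z \<bullet> (((1/2) *\<^sub>R HmI) *v Y)))"
    using GI(3) by (simp add: mv_scale_mat)
  have Hs: "transpose ((1/2) *\<^sub>R HmI) = - ((1/2) *\<^sub>R HmI)"
    by (simp add: transpose_scale GI(2))
  have rhs: "inner2 G (\<lambda>Y Z. - gmet G ((Ai ** (Ii - Jj)) *v Y) Z) (\<lambda>Y Z. HHf G Ii dG dI X Y Z)
      = trace ((Ai ** (Ii - Jj)) ** Gv ** ((1/2) *\<^sub>R HmI))"
    unfolding h Gv_def by (rule inner2_trace[OF Gs Gi Hs])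
  have "trace ((Ai ** (Ii - Jj)) ** T) = trace ((Ai ** (Ii - Jj)) ** Gv ** ((1/2) *\<^sub>R HmI))"
    unfolding T_def by (simp add: matrix_scalar_ac scalar_matrix_assoc[symmetric] matrix_mul_assoc trace_scale)
  then show ?thesis using lhs rhs unfolding Ai_def by simp
qed


lemma Ck_const: "Ck_on k U (\<lambda>_. c)"
proof (induction k arbitrary: c)
  case 0 then show ?case by (simp add: continuous_on_const)
next
  case (Suc k) then show ?case by simp
qed

lemma smooth_const: "smooth_on U (\<lambda>_. c)"
  unfolding smooth_on_def using Ck_const by blast

lemma smooth_hasD:
  assumes "smooth_on U f" "open U" "x \<in> U"
  shows "(f has_derivative frechet_derivative f (at x)) (at x)"
proof -
  have "Ck_on (Suc 0) U f" using assms(1) unfolding smooth_on_def by blast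
  then have "f differentiable_on U" by simp
  then have "f differentiable at x" using assms(2,3) differentiable_on_eq_differentiable_at by blast
  then show ?thesis using frechet_derivative_works by blast
qed

lemma deriv_const_on:
  assumes "(f has_derivative f') (at x)" "open U" "x \<in> U" "\<And>p. p \<in> U \<Longrightarrow> f p = c"
  shows "f' h = 0"
proof -
  have "((\<lambda>p. c) has_derivative f') (at x)"
    using has_derivative_transform_within_open[OF assms(1,2,3)] assms(4) by metis
  moreover have "((\<lambda>p. c) has_derivative (\<lambda>_. 0)) (at x)" by simp
  ultimately have "f' = (\<lambda>_. 0)" by (rule has_derivative_unique)
  then show ?thesis by simp
qed

lemma deriv_eq_on:
  assumes "(f has_derivative f') (at x)" "(g has_derivative g') (at x)" "open U" "x \<in> U"
    "\<And>p. p \<in> U \<Longrightarrow> f p = g p"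
  shows "f' = g'"
proof -
  have "(g has_derivative f') (at x)"
    using has_derivative_transform_within_open[OF assms(1,3,4)] assms(5) by metis
  then show ?thesis using assms(2) by (rule has_derivative_unique)
qed

lemma bl_mvY: "bounded_linear (\<lambda>A::real^'n^'m. A *v Y)"
proof -
  have "linear (\<lambda>A::real^'n^'m. A *v Y)"
    by (rule linearI) (simp_all add: matrix_vector_mult_add_rdistrib scaleR_matrix_vector_assoc)
  then show ?thesis by (simp add: linear_conv_bounded_linear)
qed

lemma bl_transpose: "bounded_linear (transpose :: real^'n^'m \<Rightarrow> real^'m^'n)"
proof -
  have "linear (transpose :: real^'n^'m \<Rightarrow> real^'m^'n)"
    by (rule linearI) (simp_all add: transpose_def vec_eq_iff)
  then show ?thesis by (simp add: linear_conv_bounded_linear)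
qed

lemma bb_mv: "bounded_bilinear (\<lambda>(A::real^'n^'m) (v::real^'n). A *v v)"
proof -
  have "bilinear (\<lambda>(A::real^'n^'m) (v::real^'n). A *v v)"
    unfolding bilinear_def
  proof
    show "\<forall>y. linear (\<lambda>A::real^'n^'m. A *v y)" using bl_mvY bounded_linear.linear by blast
    show "\<forall>x::real^'n^'m. linear ((*v) x)" by simp
  qed
  then show ?thesis by (simp add: bilinear_conv_bounded_bilinear)
qed

lemma bb_mm: "bounded_bilinear (\<lambda>(A::real^'n^'m) (B::real^'k^'n). A ** B)"
proof -
  have "bilinear (\<lambda>(A::real^'n^'m) (B::real^'k^'n). A ** B)"
    unfolding bilinear_def
  proof
    show "\<forall>y::real^'k^'n. linear (\<lambda>A::real^'n^'m. A ** y)"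
      by (intro allI linearI) (simp_all add: matrix_matrix_mult_def vec_eq_iff sum.distrib algebra_simps sum_distrib_left)
    show "\<forall>x::real^'n^'m. linear (\<lambda>B::real^'k^'n. x ** B)"
      by (intro allI linearI) (simp_all add: matrix_matrix_mult_def vec_eq_iff sum.distrib algebra_simps sum_distrib_left)
  qed
  then show ?thesis by (simp add: bilinear_conv_bounded_bilinear)
qed

lemmas has_derivative_mv = bounded_bilinear.FDERIV[OF bb_mv]
lemmas has_derivative_mm = bounded_bilinear.FDERIV[OF bb_mm]

lemma has_derivative_mvY:
  fixes f :: "'a::real_normed_vector \<Rightarrow> real^'n^'m"
  shows "(f has_derivative f') F \<Longrightarrow> ((\<lambda>p. f p *v Y) has_derivative (\<lambda>h. f' h *v Y)) F"
  by (rule bounded_linear.has_derivative[OF bl_mvY])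


lemma an_II:
  fixes I :: "real^'n \<Rightarrow> real^'n^'n"
  assumes D: "(I has_derivative dI) (at x)" and oU: "open U" and xU: "x \<in> U"
    and ac: "\<And>p. p \<in> U \<Longrightarrow> I p ** I p = - mat 1"
  shows "dI W ** I x + I x ** dI W = 0"
proof -
  have "I x ** dI W + dI W ** I x = 0"
    by (rule deriv_const_on[OF has_derivative_mm[OF D D] oU xU ac])
  then show ?thesis by (simp add: add.commute)
qed

lemma an_transpose:
  fixes g :: "real^'n \<Rightarrow> real^'n^'n"
  assumes D: "(g has_derivative dG) (at x)" and oU: "open U" and xU: "x \<in> U"
    and s: "\<And>p. p \<in> U \<Longrightarrow> transpose (g p) = g p"
  shows "transpose (dG W) = dG W"
proof -
  have "(\<lambda>h. transpose (dG h)) = dG"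
    by (rule deriv_eq_on[OF bounded_linear.has_derivative[OF bl_transpose D] D oU xU s])
  then show ?thesis by metis
qed

lemma an_herm:
  fixes g I :: "real^'n \<Rightarrow> real^'n^'n"
  assumes Dg: "(g has_derivative dG) (at x)" and DI: "(I has_derivative dI) (at x)"
    and oU: "open U" and xU: "x \<in> U"
    and h: "\<And>p. p \<in> U \<Longrightarrow> hermitian_at (g p) (I p)"
  shows "(dI W *v X) \<bullet> (g x *v (I x *v Y)) + (I x *v X) \<bullet> (dG W *v (I x *v Y))
                 + (I x *v X) \<bullet> (g x *v (dI W *v Y)) = X \<bullet> (dG W *v Y)"
proof -
  note D1 = has_derivative_mvY[OF DI, of X]
  note D2 = has_derivative_mvY[OF DI, of Y]
  note D3 = has_derivative_mv[OF Dg D2]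
  note D4 = has_derivative_inner[OF D1 D3]
  note D5 = has_derivative_inner[OF has_derivative_const[of X] has_derivative_mvY[OF Dg, of Y]]
  note D = has_derivative_diff[OF D4 D5]
  have "(I x *v X) \<bullet> (g x *v (dI W *v Y) + dG W *v (I x *v Y)) + (dI W *v X) \<bullet> (g x *v (I x *v Y))
      - (X \<bullet> (dG W *v Y) + 0 \<bullet> (g x *v Y)) = 0"
    by (rule deriv_const_on[OF D oU xU]) (use h in \<open>simp add: hermitian_at_def gmet_def\<close>)
  then show ?thesis by (simp add: inner_add_right algebra_simps)
qed

lemma Dir_mvY:
  fixes I :: "real^'n \<Rightarrow> real^'n^'n"
  assumes DI: "(I has_derivative dI) (at x)"
  shows "Dir (\<lambda>p. I p *v Y) x v = dI v *v Y"
proof -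
  have "(\<lambda>h. dI h *v Y) = frechet_derivative (\<lambda>p. I p *v Y) (at x)"
    by (rule frechet_derivative_at[OF has_derivative_mvY[OF DI]])
  then show ?thesis unfolding Dir_def by (metis (no_types))
qed

lemma Dir_const: "Dir (\<lambda>p. c) x v = 0"
  unfolding Dir_def by simp

lemma an_nij:
  fixes I :: "real^'n \<Rightarrow> real^'n^'n"
  assumes DI: "(I has_derivative dI) (at x)" and xU: "x \<in> U"
    and ci: "cx_integrable_on U I"
  shows "dI (I x *v X) *v Y - dI (I x *v Y) *v X + I x *v (dI Y *v X) - I x *v (dI X *v Y) = 0"
proof -
  have "nijenhuis I (\<lambda>_. X) (\<lambda>_. Y) x = 0"
    using ci xU smooth_const unfolding cx_integrable_on_def by blast
  then show ?thesis
    unfolding nijenhuis_def Let_def lie_bracket_def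
    by (simp add: Dir_mvY[OF DI] Dir_const mv_rneg matrix_vector_mult_diff_distrib algebra_simps)
qed

lemma Dir_kf:
  fixes g I :: "real^'n \<Rightarrow> real^'n^'n"
  assumes Dg: "(g has_derivative dG) (at x)" and DI: "(I has_derivative dI) (at x)"
    and oU: "open U" and xU: "x \<in> U"
    and ac: "\<And>p. p \<in> U \<Longrightarrow> I p ** I p = - mat 1"
  shows "Dir (\<lambda>p. kform g I p (I p *v B) (I p *v C)) x W = DWf (g x) (I x) dG dI W B C"
proof -
  note D3 = has_derivative_mv[OF Dg has_derivative_mvY[OF DI, of C]]
  note D4 = has_derivative_minus[OF bounded_linear.has_derivative[OF bounded_linear_inner_right[of B] D3]]
  have eq: "\<And>p. p \<in> U \<Longrightarrow> - (B \<bullet> (g p *v (I p *v C))) = kform g I p (I p *v B) (I p *v C)"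
    by (simp add: kform_def gmet_def matrix_vector_mul_assoc ac mv_neg)
  have D: "((\<lambda>p. kform g I p (I p *v B) (I p *v C)) has_derivative
       (\<lambda>h. - (B \<bullet> (g x *v (dI h *v C) + dG h *v (I x *v C))))) (at x)"
    by (rule has_derivative_transform_within_open[OF D4 oU xU eq])
  have "Dir (\<lambda>p. kform g I p (I p *v B) (I p *v C)) x W = - (B \<bullet> (g x *v (dI W *v C) + dG W *v (I x *v C)))"
  proof -
    have fd: "(\<lambda>h. - (B \<bullet> (g x *v (dI h *v C) + dG h *v (I x *v C))))
        = frechet_derivative (\<lambda>p. kform g I p (I p *v B) (I p *v C)) (at x)"
      by (rule frechet_derivative_at[OF D])
    show ?thesis unfolding Dir_def fd[symmetric] by simp
  qed
  then show ?thesis by (simp add: DWf_def inner_add_right)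
qed

lemma an_dc2:
  fixes g I :: "real^'n \<Rightarrow> real^'n^'n"
  assumes Dg: "(g has_derivative dG) (at x)" and DI: "(I has_derivative dI) (at x)"
    and oU: "open U" and xU: "x \<in> U"
    and ac: "\<And>p. p \<in> U \<Longrightarrow> I p ** I p = - mat 1"
  shows "dc2 I (kform g I) x X Y Z = HHf (g x) (I x) dG dI X Y Z"
  unfolding dc2_def ext_d2_def HHf_def
  by (simp add: Dir_kf[OF Dg DI oU xU ac])


lemma hasD_entry: "((\<lambda>A::real^'n^'m. A$i$j) has_derivative (\<lambda>h. h$i$j)) (at M)"
  by (rule bounded_linear.has_derivative[OF bounded_linear_vec_nth
        bounded_linear.has_derivative[OF bounded_linear_vec_nth has_derivative_ident]])

lemma det_hasD0:
  fixes M :: "real^'n^'n"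
  shows "(det has_derivative (\<lambda>B. \<Sum>p\<in>{p. p permutes (UNIV::'n set)}. of_int (sign p) *
      (\<Sum>i\<in>UNIV. B$i$(p i) * (\<Prod>j\<in>UNIV - {i}. M$j$(p j))))) (at M)"
proof -
  have e: "det = (\<lambda>A::real^'n^'n. \<Sum>p\<in>{p. p permutes (UNIV::'n set)}. of_int (sign p) * (\<Prod>i\<in>UNIV. A$i$(p i)))"
    by (rule ext) (simp add: det_def)
  show ?thesis unfolding e
    by (intro has_derivative_sum has_derivative_mult_right has_derivative_prod hasD_entry)
qed

lemma det_row_repl:
  fixes M :: "real^'n^'n"
  shows "det (\<chi> j. if j = i then v else M$j) = (\<Sum>p\<in>{p. p permutes (UNIV::'n set)}. of_int (sign p) *
      (v$(p i) * (\<Prod>j\<in>UNIV - {i}. M$j$(p j))))"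
proof -
  have "\<And>p. (\<Prod>j\<in>UNIV. (\<chi> j. if j = i then v else M$j)$j$(p j)) = v$(p i) * (\<Prod>j\<in>UNIV - {i}. M$j$(p j))"
  proof -
    fix p :: "'n \<Rightarrow> 'n"
    have "(\<Prod>j\<in>UNIV. (\<chi> j. if j = i then v else M$j)$j$(p j))
       = (\<chi> j. if j = i then v else M$j)$i$(p i) * (\<Prod>j\<in>UNIV - {i}. (\<chi> j. if j = i then v else M$j)$j$(p j))"
      by (rule prod.remove) auto
    also have "(\<Prod>j\<in>UNIV - {i}. (\<chi> j. if j = i then v else M$j)$j$(p j)) = (\<Prod>j\<in>UNIV - {i}. M$j$(p j))"
      by (rule prod.cong) auto
    finally show "(\<Prod>j\<in>UNIV. (\<chi> j. if j = i then v else M$j)$j$(p j)) = v$(p i) * (\<Prod>j\<in>UNIV - {i}. M$j$(p j))"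
      by simp
  qed
  then show ?thesis unfolding det_def by simp
qed

lemma row_of_mult: "((C::real^'n^'n) ** M)$i = (\<Sum>k\<in>UNIV. C$i$k *s M$k)"
  by (simp add: matrix_matrix_mult_def vec_eq_iff sum_component mult.commute)

lemma det_row_basis:
  fixes M :: "real^'n^'n"
  shows "det (\<chi> j. if j = i then M$k else M$j) = (if k = i then det M else 0)"
proof (cases "k = i")
  case True
  have "(\<chi> j. if j = i then M$k else M$j) = M" using True by (simp add: vec_eq_iff)
  then show ?thesis using True by simp
next
  case False
  have "det (\<chi> j. if j = i then M$k else M$j) = 0"
    by (rule det_identical_rows[OF False[symmetric]]) (simp add: row_def vec_eq_iff False)
  then show ?thesis using False by simp
qed

lemma jacobi_sum:
  fixes M B :: "real^'n^'n"
  assumes inv: "invertible M"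
  shows "(\<Sum>i\<in>UNIV. det (\<chi> j. if j = i then B$i else M$j)) = det M * trace (matrix_inv M ** B)"
proof -
  define C where "C = B ** matrix_inv M"
  have BC: "B = C ** M" unfolding C_def using minv[OF inv] by (simp add: matrix_mul_assoc[symmetric])
  have "\<And>i. det (\<chi> j. if j = i then B$i else M$j) = C$i$i * det M"
  proof -
    fix i
    have "det (\<chi> j. if j = i then B$i else M$j) = det (\<chi> j. if j = i then (\<Sum>k\<in>UNIV. C$i$k *s M$k) else M$j)"
    proof -
      have "B$i = (\<Sum>k\<in>UNIV. C$i$k *s M$k)" by (subst BC) (rule row_of_mult)
      then show ?thesis by (simp only:)
    qed
    also have "\<dots> = (\<Sum>k\<in>UNIV. det (\<chi> j. if j = i then C$i$k *s M$k else M$j))"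
      by (rule det_linear_row_sum) simp
    also have "\<dots> = (\<Sum>k\<in>UNIV. C$i$k * det (\<chi> j. if j = i then M$k else M$j))"
      by (simp add: det_row_mul)
    also have "\<dots> = C$i$i * det M"
      by (simp add: det_row_basis if_distrib cong: if_cong)
    finally show "det (\<chi> j. if j = i then B$i else M$j) = C$i$i * det M" .
  qed
  then have "(\<Sum>i\<in>UNIV. det (\<chi> j. if j = i then B$i else M$j)) = det M * trace C"
    by (simp add: trace_def sum_distrib_left mult.commute)
  also have "trace C = trace (matrix_inv M ** B)" unfolding C_def by (rule trace_mul_sym)
  finally show ?thesis .
qed

lemma det_hasD:
  fixes M :: "real^'n^'n"
  assumes inv: "invertible M"
  shows "(det has_derivative (\<lambda>B. det M * trace (matrix_inv M ** B))) (at M)"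
proof -
  have "(\<lambda>B. \<Sum>p\<in>{p. p permutes (UNIV::'n set)}. of_int (sign p) *
      (\<Sum>i\<in>UNIV. B$i$(p i) * (\<Prod>j\<in>UNIV - {i}. M$j$(p j)))) = (\<lambda>B. det M * trace (matrix_inv M ** B))"
  proof
    fix B :: "real^'n^'n"
    have "(\<Sum>p\<in>{p. p permutes (UNIV::'n set)}. of_int (sign p) *
      (\<Sum>i\<in>UNIV. B$i$(p i) * (\<Prod>j\<in>UNIV - {i}. M$j$(p j))))
      = (\<Sum>i\<in>UNIV. \<Sum>p\<in>{p. p permutes (UNIV::'n set)}. of_int (sign p) * (B$i$(p i) * (\<Prod>j\<in>UNIV - {i}. M$j$(p j))))"
      by (simp add: sum_distrib_left) (rule sum.swap)
    also have "\<dots> = (\<Sum>i\<in>UNIV. det (\<chi> j. if j = i then B$i else M$j))"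
      by (simp add: det_row_repl)
    also have "\<dots> = det M * trace (matrix_inv M ** B)" by (rule jacobi_sum[OF inv])
    finally show "(\<Sum>p\<in>{p. p permutes (UNIV::'n set)}. of_int (sign p) *
      (\<Sum>i\<in>UNIV. B$i$(p i) * (\<Prod>j\<in>UNIV - {i}. M$j$(p j)))) = det M * trace (matrix_inv M ** B)" .
  qed
  then show ?thesis using det_hasD0[of M] by simp
qed

lemma ln_abs_hasD:
  fixes t :: real
  assumes "t \<noteq> 0"
  shows "((\<lambda>s. ln \<bar>s\<bar>) has_real_derivative 1/t) (at t)"
proof (cases "t > 0")
  case True
  show ?thesis
    by (rule has_field_derivative_transform_within_open[OF DERIV_ln_divide[OF True], of "{0<..}"])
       (use True in auto)
next
  case False
  then have tn: "t < 0" using assms by simp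
  have "((\<lambda>s. ln (- s)) has_real_derivative (1 / (- t)) * (- 1)) (at t)"
    by (rule DERIV_chain2[OF DERIV_ln_divide]) (use tn in \<open>auto intro!: derivative_eq_intros\<close>)
  then have d: "((\<lambda>s. ln (- s)) has_real_derivative 1/t) (at t)" by simp
  show ?thesis
    by (rule has_field_derivative_transform_within_open[OF d, of "{..<0}"]) (use tn in auto)
qed

lemma Dir_lndet:
  fixes I J :: "real^'n \<Rightarrow> real^'n^'n"
  assumes DI: "(I has_derivative dI) (at x)" and DJ: "(J has_derivative dJ) (at x)"
    and nd: "det (I x + J x) \<noteq> 0"
  shows "Dir (\<lambda>p. ln \<bar>det (I p + J p)\<bar>) x X = trace (matrix_inv (I x + J x) ** (dI X + dJ X))"
proof -
  have inv: "invertible (I x + J x)" using nd invertible_det_nz by blast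
  note DA = has_derivative_add[OF DI DJ]
  note Dd = has_derivative_compose[OF DA det_hasD[OF inv]]
  note Dl = has_derivative_compose[OF Dd ln_abs_hasD[OF nd, unfolded has_field_derivative_def]]
  have fd: "(\<lambda>h. 1 / det (I x + J x) * (det (I x + J x) * trace (matrix_inv (I x + J x) ** (dI h + dJ h))))
      = frechet_derivative (\<lambda>p. ln \<bar>det (I p + J p)\<bar>) (at x)"
    by (rule frechet_derivative_at[OF Dl])
  show ?thesis unfolding Dir_def fd[symmetric] using nd by simp
qed


theorem lemma2p13:
  fixes U :: "(real^'n) set"
    and g I J :: "real^'n \<Rightarrow> real^'n^'n"
  assumes gk: "gen_kahler_on U g I J"
    and nondeg: "\<forall>x\<in>U. det (I x + J x) \<noteq> 0"
    and xU: "x \<in> U"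
  shows "Dir (\<lambda>p. ln \<bar>det (I p + J p)\<bar>) x X
           = - 2 * inner2 (g x) (bform g I J x) (\<lambda>Y Z. dc2 I (kform g I) x X Y Z)"
proof -
  have oU: "open U" and sg: "smooth_on U g" and sI: "smooth_on U I" and sJ: "smooth_on U J"
    and pw: "\<forall>x\<in>U. riem_metric_at (g x) \<and> almost_complex_at (I x) \<and> almost_complex_at (J x)
            \<and> hermitian_at (g x) (I x) \<and> hermitian_at (g x) (J x)"
    and ciI: "cx_integrable_on U I" and ciJ: "cx_integrable_on U J"
    and Hc0: "\<forall>x\<in>U. \<forall>X Y Z. dc2 I (kform g I) x X Y Z = - dc2 J (kform g J) x X Y Z"
    using gk unfolding gen_kahler_on_def by auto
  define dG where "dG = frechet_derivative g (at x)"
  define dI where "dI = frechet_derivative I (at x)"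
  define dJ where "dJ = frechet_derivative J (at x)"
  have Dg: "(g has_derivative dG) (at x)" unfolding dG_def by (rule smooth_hasD[OF sg oU xU])
  have DI: "(I has_derivative dI) (at x)" unfolding dI_def by (rule smooth_hasD[OF sI oU xU])
  have DJ: "(J has_derivative dJ) (at x)" unfolding dJ_def by (rule smooth_hasD[OF sJ oU xU])
  have lG: "linear dG" using has_derivative_linear[OF Dg] .
  have lI: "linear dI" using has_derivative_linear[OF DI] .
  have lJ: "linear dJ" using has_derivative_linear[OF DJ] .
  have acI: "\<And>p. p \<in> U \<Longrightarrow> I p ** I p = - mat 1" using pw by (auto simp: almost_complex_at_def)
  have acJ: "\<And>p. p \<in> U \<Longrightarrow> J p ** J p = - mat 1" using pw by (auto simp: almost_complex_at_def)
  have gsymU: "\<And>p. p \<in> U \<Longrightarrow> transpose (g p) = g p" using pw by (auto simp: riem_metric_at_def)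
  have hIU: "\<And>p. p \<in> U \<Longrightarrow> hermitian_at (g p) (I p)" using pw by auto
  have hJU: "\<And>p. p \<in> U \<Longrightarrow> hermitian_at (g p) (J p)" using pw by auto
  have Gs: "transpose (g x) = g x" using gsymU[OF xU] .
  have Gi: "invertible (g x)"
  proof -
    have pos: "\<And>v. v \<noteq> 0 \<Longrightarrow> gmet (g x) v v > 0" using pw xU by (auto simp: riem_metric_at_def)
    have "\<forall>v. g x *v v = 0 \<longrightarrow> v = 0"
    proof (intro allI impI)
      fix v assume "g x *v v = 0"
      then have "gmet (g x) v v = 0" by (simp add: gmet_def)
      then show "v = 0" using pos by fastforce
    qed
    then show ?thesis using matrix_left_invertible_ker invertible_left_inverse by blast
  qed
  have hI: "\<forall>X Y. gmet (g x) (I x *v X) (I x *v Y) = gmet (g x) X Y"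
    using hIU[OF xU] by (simp add: hermitian_at_def)
  have hJ: "\<forall>X Y. gmet (g x) (J x *v X) (J x *v Y) = gmet (g x) X Y"
    using hJU[OF xU] by (simp add: hermitian_at_def)
  have dGs: "\<forall>W. transpose (dG W) = dG W" using an_transpose[OF Dg oU xU gsymU] by blast
  have dII: "\<forall>W. dI W ** I x + I x ** dI W = 0" using an_II[OF DI oU xU acI] by blast
  have dJJ: "\<forall>W. dJ W ** J x + J x ** dJ W = 0" using an_II[OF DJ oU xU acJ] by blast
  have dhI: "\<forall>W X Y. (dI W *v X) \<bullet> (g x *v (I x *v Y)) + (I x *v X) \<bullet> (dG W *v (I x *v Y))
                 + (I x *v X) \<bullet> (g x *v (dI W *v Y)) = X \<bullet> (dG W *v Y)"
    using an_herm[OF Dg DI oU xU hIU] by blast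
  have dhJ: "\<forall>W X Y. (dJ W *v X) \<bullet> (g x *v (J x *v Y)) + (J x *v X) \<bullet> (dG W *v (J x *v Y))
                 + (J x *v X) \<bullet> (g x *v (dJ W *v Y)) = X \<bullet> (dG W *v Y)"
    using an_herm[OF Dg DJ oU xU hJU] by blast
  have nI: "\<forall>X Y. dI (I x *v X) *v Y - dI (I x *v Y) *v X + I x *v (dI Y *v X) - I x *v (dI X *v Y) = 0"
    using an_nij[OF DI xU ciI] by blast
  have nJ: "\<forall>X Y. dJ (J x *v X) *v Y - dJ (J x *v Y) *v X + J x *v (dJ Y *v X) - J x *v (dJ X *v Y) = 0"
    using an_nij[OF DJ xU ciJ] by blast
  have dcI: "\<And>X Y Z. dc2 I (kform g I) x X Y Z = HHf (g x) (I x) dG dI X Y Z"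
    by (rule an_dc2[OF Dg DI oU xU acI])
  have dcJ: "\<And>X Y Z. dc2 J (kform g J) x X Y Z = HHf (g x) (J x) dG dJ X Y Z"
    by (rule an_dc2[OF Dg DJ oU xU acJ])
  have Hc: "\<forall>X Y Z. HHf (g x) (I x) dG dI X Y Z = - HHf (g x) (J x) dG dJ X Y Z"
  proof -
    have "\<forall>X Y Z. dc2 I (kform g I) x X Y Z = - dc2 J (kform g J) x X Y Z" using Hc0 xU by blast
    then show ?thesis unfolding dcI dcJ .
  qed
  have dA: "det (I x + J x) \<noteq> 0" using nondeg xU by blast
  have main: "trace (matrix_inv (I x + J x) ** (dI X + dJ X))
     = - 2 * inner2 (g x) (\<lambda>Y Z. - gmet (g x) ((matrix_inv (I x + J x) ** (I x - J x)) *v Y) Z)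
                      (\<lambda>Y Z. HHf (g x) (I x) dG dI X Y Z)"
    by (rule alg_main[OF Gs Gi acI[OF xU] acJ[OF xU] hI hJ lG lI lJ dGs dII dJJ dhI dhJ nI nJ Hc dA])
  have b: "bform g I J x = (\<lambda>Y Z. - gmet (g x) ((matrix_inv (I x + J x) ** (I x - J x)) *v Y) Z)"
    by (simp add: bform_def fun_eq_iff)
  have h: "(\<lambda>Y Z. dc2 I (kform g I) x X Y Z) = (\<lambda>Y Z. HHf (g x) (I x) dG dI X Y Z)"
    by (simp add: dcI)
  show ?thesis
    unfolding Dir_lndet[OF DI DJ dA] b h using main by simp
qed

end
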